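(* Let $k$ be a field of characteristic zero, $S=k[x,y]$, and let $I=(x^{\alpha},y^{\beta})$ and $J=(x^a,y^b)$ be ideals of $S$, where $a,b$ are positive integers, $0\le\alpha\le a$ and $0\le\beta\le b$. Then the graded $S$-module $I/J$ has the strong Lefschetz property.
   Context: $S$ is standard graded. A finite graded $S$-module $M=\bigoplus_i M_i$ has the strong Lefschetz property if there exists a linear form $\ell\in S_1$ such that the multiplication map $\times\ell^d\colon M_i\to M_{i+d}$ has maximal rank (is injective or surjective) for all $d>0$ and all $i$. *)

theory Defs
  imports "HOL-Computational_Algebra.Polynomial"
begin

text \<open>The bivariate polynomial ring S = k[x,y] is represented as ('k poly) poly:
  the outer variable is y, the inner variable is x, so the coefficient of
  x^i y^j in p is coeff (coeff p j) i.\<close>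

definition var_x :: "'k::comm_ring_1 poly poly" where
  "var_x = [: [:0, 1:] :]"

definition var_y :: "'k::comm_ring_1 poly poly" where
  "var_y = [: 0, 1 :]"

definition homog :: "nat \<Rightarrow> 'k::comm_ring_1 poly poly \<Rightarrow> bool" where
  "homog d p \<longleftrightarrow> (\<forall>i j. coeff (coeff p j) i \<noteq> 0 \<longrightarrow> i + j = d)"

definition ideal2 :: "'k::comm_ring_1 poly poly \<Rightarrow> 'k poly poly \<Rightarrow> 'k poly poly set" where
  "ideal2 f g = {p * f + q * g | p q. True}"

text \<open>Strong Lefschetz property of the graded module I/J (J \<subseteq> I homogeneous ideals),
  whose degree-i component is I_i / J_i.\<close>
definition lef_inj :: "'k::comm_ring_1 poly poly set \<Rightarrow> 'k poly poly set \<Rightarrow> 'k poly poly \<Rightarrow> nat \<Rightarrow> nat \<Rightarrow> bool" where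
  "lef_inj I J l d i \<longleftrightarrow> (\<forall>f\<in>I. homog i f \<longrightarrow> l ^ d * f \<in> J \<longrightarrow> f \<in> J)"

definition lef_surj :: "'k::comm_ring_1 poly poly set \<Rightarrow> 'k poly poly set \<Rightarrow> 'k poly poly \<Rightarrow> nat \<Rightarrow> nat \<Rightarrow> bool" where
  "lef_surj I J l d i \<longleftrightarrow>
     (\<forall>g\<in>I. homog (i + d) g \<longrightarrow> (\<exists>f\<in>I. homog i f \<and> g - l ^ d * f \<in> J))"

definition quot_has_SLP :: "'k::comm_ring_1 poly poly set \<Rightarrow> 'k poly poly set \<Rightarrow> bool" where
  "quot_has_SLP I J \<longleftrightarrow>
     (\<exists>l. homog 1 l \<and> (\<forall>d>0. \<forall>i. lef_inj I J l d i \<or> lef_surj I J l d i))"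

end

theory Submission
  imports Defs "Jordan_Normal_Form.Determinant"
begin

definition cf :: "'k::comm_ring_1 poly poly \<Rightarrow> nat \<Rightarrow> nat \<Rightarrow> 'k" where
  "cf f i j = coeff (coeff f j) i"

definition cst :: "'k::comm_ring_1 \<Rightarrow> 'k poly poly" where
  "cst c = [:[:c:]:]"

lemma cf_add[simp]: "cf (f + g) i j = cf f i j + cf g i j"
  by (simp add: cf_def)
lemma cf_diff[simp]: "cf (f - g) i j = cf f i j - cf (g :: 'k::comm_ring_1 poly poly) i j"
  by (simp add: cf_def)
lemma cf_0[simp]: "cf 0 i j = 0"
  by (simp add: cf_def)
lemma cf_sum: "cf (\<Sum>c\<in>A. F c) i j = (\<Sum>c\<in>A. cf (F c) i j)"
  by (simp add: cf_def coeff_sum)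
lemma cf_1: "cf 1 i j = (if i = 0 \<and> j = 0 then 1 else 0)"
  by (simp add: cf_def coeff_1)
lemma cf_eqI: "(\<And>i j. cf f i j = cf g i j) \<Longrightarrow> f = g"
  unfolding cf_def by (rule poly_eqI, rule poly_eqI) auto

lemma cf_cst_mult[simp]: "cf (cst c * f) i j = c * cf f i j"
  by (simp add: cf_def cst_def)

lemma cf_x_mult: "cf (var_x * f) i j = (if 1 \<le> i then cf f (i - 1) j else 0)"
  by (cases i) (simp_all add: cf_def var_x_def mult_pCons_left coeff_pCons)

lemma cf_y_mult: "cf (var_y * f) i j = (if 1 \<le> j then cf f i (j - 1) else 0)"
  by (cases j) (simp_all add: cf_def var_y_def mult_pCons_left coeff_pCons)

lemma cf_xp_mult: "cf (var_x ^ k * f) i j = (if k \<le> i then cf f (i - k) j else 0)"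
proof (induction k arbitrary: i)
  case 0 then show ?case by simp
next
  case (Suc k) show ?case
    by (auto simp add: mult.assoc cf_x_mult Suc.IH)
qed

lemma cf_yp_mult: "cf (var_y ^ k * f) i j = (if k \<le> j then cf f i (j - k) else 0)"
proof (induction k arbitrary: j)
  case 0 then show ?case by simp
next
  case (Suc k) show ?case
    by (auto simp add: mult.assoc cf_y_mult Suc.IH)
qed

lemma of_nat_cst: "(of_nat m :: 'k::comm_ring_1 poly poly) = cst (of_nat m)"
  by (simp add: cst_def of_nat_poly)


lemma ideal2_add: "u \<in> ideal2 f g \<Longrightarrow> v \<in> ideal2 f g \<Longrightarrow> u + v \<in> ideal2 f g"
  unfolding ideal2_def
proof clarify
  fix p q p' q'
  show "\<exists>pa qa. p * f + q * g + (p' * f + q' * g) = pa * f + qa * g \<and> True"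
    by (rule exI[of _ "p + p'"], rule exI[of _ "q + q'"]) (simp add: algebra_simps)
qed

lemma ideal2_mult: "u \<in> ideal2 f g \<Longrightarrow> r * u \<in> ideal2 f g"
  unfolding ideal2_def
proof clarify
  fix p q
  show "\<exists>pa qa. r * (p * f + q * g) = pa * f + qa * g \<and> True"
    by (rule exI[of _ "r * p"], rule exI[of _ "r * q"]) (simp add: algebra_simps)
qed

lemma ideal2_0: "0 \<in> ideal2 f g"
  unfolding ideal2_def by (rule CollectI, rule exI[of _ 0], rule exI[of _ 0]) simp

lemma ideal2_uminus: "u \<in> ideal2 f g \<Longrightarrow> - u \<in> ideal2 f (g :: 'a :: comm_ring_1 poly poly)"
  using ideal2_mult[of u f g "-1"] by simp

lemma ideal2_diff: "u \<in> ideal2 f g \<Longrightarrow> v \<in> ideal2 f g \<Longrightarrow> u - v \<in> ideal2 f (g :: 'a :: comm_ring_1 poly poly)"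
  using ideal2_add[of u f g "- v"] ideal2_uminus[of v f g] by simp

lemma ideal2_sum: "finite A \<Longrightarrow> (\<And>c. c \<in> A \<Longrightarrow> F c \<in> ideal2 f g) \<Longrightarrow> sum F A \<in> ideal2 f g"
  by (induction A rule: finite_induct) (auto intro: ideal2_add ideal2_0)

lemma ideal2_gen1: "r * f \<in> ideal2 f g"
  unfolding ideal2_def by (rule CollectI, rule exI[of _ r], rule exI[of _ 0]) simp

lemma ideal2_gen2: "r * g \<in> ideal2 f (g :: 'a :: comm_ring_1 poly poly)"
  unfolding ideal2_def by (rule CollectI, rule exI[of _ 0], rule exI[of _ r]) simp

definition mon :: "nat \<Rightarrow> nat \<Rightarrow> 'k::comm_ring_1 poly poly" where
  "mon i j = var_x ^ i * (var_y ^ j * 1)"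

lemma cf_mon: "cf (mon i j :: 'k::comm_ring_1 poly poly) P Q = (if P = i \<and> Q = j then 1 else 0)"
  unfolding mon_def by (simp only: cf_xp_mult cf_yp_mult cf_1) auto

lemma cf_bound: "\<exists>N. \<forall>i j. (N \<le> i \<or> N \<le> j) \<longrightarrow> cf f i j = 0"
proof -
  define N where "N = Suc (degree f + (\<Sum>j\<le>degree f. degree (coeff f j)))"
  have "cf f i j = 0" if "N \<le> i \<or> N \<le> j" for i j
  proof (cases "j \<le> degree f")
    case True
    have "degree (coeff f j) \<le> (\<Sum>j\<le>degree f. degree (coeff f j))"
      by (rule member_le_sum) (use True in auto)
    then have "degree (coeff f j) < i \<or> degree f < j" using that unfolding N_def by auto
    then show ?thesis using True by (auto simp: cf_def coeff_eq_0)
  next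
    case False
    then show ?thesis by (simp add: cf_def coeff_eq_0)
  qed
  then show ?thesis by blast
qed

lemma expand: "\<exists>N. f = (\<Sum>i<N. \<Sum>j<N. cst (cf f i j) * mon i j)"
proof -
  obtain N where N: "\<And>i j. (N \<le> i \<or> N \<le> j) \<Longrightarrow> cf f i j = 0" using cf_bound by blast
  have "f = (\<Sum>i<N. \<Sum>j<N. cst (cf f i j) * mon i j)"
  proof (rule cf_eqI)
    fix P Q
    have "cf (\<Sum>i<N. \<Sum>j<N. cst (cf f i j) * mon i j) P Q
       = (\<Sum>i<N. \<Sum>j<N. cf f i j * (if P = i \<and> Q = j then 1 else 0))"
      by (simp add: cf_sum cf_mon)
    also have "\<dots> = (\<Sum>i<N. if i = P \<and> Q < N then cf f i Q else 0)"
    proof (rule sum.cong[OF refl])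
      fix i
      have "(\<Sum>j<N. cf f i j * (if P = i \<and> Q = j then 1 else 0)) = (\<Sum>j<N. if Q = j then (if P = i then cf f i j else 0) else 0)"
        by (rule sum.cong) auto
      also have "\<dots> = (if i = P \<and> Q < N then cf f i Q else 0)"
        by (cases "P = i") (simp_all add: sum.delta')
      finally show "(\<Sum>j<N. cf f i j * (if P = i \<and> Q = j then 1 else 0)) = (if i = P \<and> Q < N then cf f i Q else 0)" .
    qed
    also have "\<dots> = (if P < N \<and> Q < N then cf f P Q else 0)"
      by (cases "Q < N") (simp_all add: sum.delta)
    also have "\<dots> = cf f P Q" using N[of P Q] by auto
    finally show "cf f P Q = cf (\<Sum>i<N. \<Sum>j<N. cst (cf f i j) * mon i j) P Q" by simp
  qed
  then show ?thesis by blast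
qed

lemma mon_split: "mon i j = var_x ^ k * mon (i - k) j" if "k \<le> i"
proof -
  have e: "var_x ^ i = (var_x ^ k * var_x ^ (i - k) :: 'a::comm_ring_1 poly poly)"
    using that by (simp flip: power_add)
  show ?thesis unfolding mon_def by (subst e) (simp only: mult.assoc)
qed

lemma mon_split2: "mon i j = var_y ^ k * mon i (j - k)" if "k \<le> j"
proof -
  have e: "var_y ^ j = (var_y ^ k * var_y ^ (j - k) :: 'a::comm_ring_1 poly poly)"
    using that by (simp flip: power_add)
  show ?thesis unfolding mon_def by (subst e) (simp only: mult.assoc mult.left_commute)
qed

lemma mem_ideal_iff:
  "f \<in> ideal2 (var_x ^ A) (var_y ^ B) \<longleftrightarrow> (\<forall>i j. cf f i j \<noteq> 0 \<longrightarrow> A \<le> i \<or> B \<le> j)"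
proof
  assume "f \<in> ideal2 (var_x ^ A) (var_y ^ B)"
  then obtain p q where f: "f = p * var_x ^ A + q * var_y ^ B" unfolding ideal2_def by blast
  show "\<forall>i j. cf f i j \<noteq> 0 \<longrightarrow> A \<le> i \<or> B \<le> j"
  proof (intro allI impI)
    fix i j assume "cf f i j \<noteq> 0"
    moreover have "cf f i j = cf (var_x ^ A * p) i j + cf (var_y ^ B * q) i j"
      unfolding f mult.commute[of p "var_x ^ A"] mult.commute[of q "var_y ^ B"] by (rule cf_add)
    ultimately have "cf (var_x ^ A * p) i j + cf (var_y ^ B * q) i j \<noteq> 0" by simp
    then show "A \<le> i \<or> B \<le> j"
      by (simp only: cf_xp_mult cf_yp_mult) (auto split: if_splits)
  qed
next
  assume H: "\<forall>i j. cf f i j \<noteq> 0 \<longrightarrow> A \<le> i \<or> B \<le> j"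
  obtain N where N: "f = (\<Sum>i<N. \<Sum>j<N. cst (cf f i j) * mon i j)" using expand by blast
  have "cst (cf f i j) * mon i j \<in> ideal2 (var_x ^ A) (var_y ^ B)" for i j
  proof (cases "cf f i j = 0")
    case True then show ?thesis by (simp add: cst_def ideal2_0)
  next
    case False
    then have "A \<le> i \<or> B \<le> j" using H by blast
    then show ?thesis
    proof
      assume "A \<le> i"
      then have "cst (cf f i j) * mon i j = (cst (cf f i j) * mon (i - A) j) * var_x ^ A"
        by (subst mon_split[OF \<open>A \<le> i\<close>, of j]) (simp only: ac_simps)
      then show ?thesis by (simp add: ideal2_gen1)
    next
      assume "B \<le> j"
      then have "cst (cf f i j) * mon i j = (cst (cf f i j) * mon i (j - B)) * var_y ^ B"
        by (subst mon_split2[OF \<open>B \<le> j\<close>, of i]) (simp only: ac_simps)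
      then show ?thesis by (simp add: ideal2_gen2)
    qed
  qed
  then have "(\<Sum>i<N. \<Sum>j<N. cst (cf f i j) * mon i j) \<in> ideal2 (var_x ^ A) (var_y ^ B)"
    by (intro ideal2_sum finite_lessThan)
  then show "f \<in> ideal2 (var_x ^ A) (var_y ^ B)" by (subst N)
qed


abbreviation lin :: "'k::comm_ring_1 poly poly" where "lin \<equiv> var_x + var_y"

lemma cf_lpow_mult:
  "cf ((var_x + var_y) ^ d * f) P Q =
     (\<Sum>k\<le>d. of_nat (d choose k) * (if k \<le> P \<and> d - k \<le> Q then cf f (P - k) (Q - (d - k)) else 0))"
proof -
  have "(var_x + var_y) ^ d * f = (\<Sum>k\<le>d. cst (of_nat (d choose k)) * (var_x ^ k * (var_y ^ (d - k) * f)))"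
    by (simp add: binomial_ring sum_distrib_right of_nat_cst mult.assoc)
  then have "cf ((var_x + var_y) ^ d * f) P Q = (\<Sum>k\<le>d. cf (cst (of_nat (d choose k)) * (var_x ^ k * (var_y ^ (d - k) * f))) P Q)"
    by (simp only: cf_sum)
  also have "\<dots> = (\<Sum>k\<le>d. of_nat (d choose k) * (if k \<le> P \<and> d - k \<le> Q then cf f (P - k) (Q - (d - k)) else 0))"
    by (rule sum.cong[OF refl]) (simp only: cf_cst_mult cf_xp_mult cf_yp_mult, auto)
  finally show ?thesis .
qed

definition Bn :: "nat \<Rightarrow> nat \<Rightarrow> nat \<Rightarrow> nat" where
  "Bn d P s = (if s \<le> P then d choose (P - s) else 0)"

lemma cf_lpow_mon:
  assumes "s \<le> n"
  shows "cf ((var_x + var_y) ^ d * mon s (n - s) :: 'k::comm_ring_1 poly poly) P (n + d - P) = of_nat (Bn d P s)"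
proof -
  have "cf ((var_x + var_y) ^ d * mon s (n - s) :: 'k poly poly) P (n + d - P)
     = (\<Sum>k\<le>d. if k = P - s \<and> s \<le> P then of_nat (d choose k) else 0)"
    unfolding cf_lpow_mult
  proof (rule sum.cong[OF refl])
    fix k assume k: "k \<in> {..d}"
    have "(k \<le> P \<and> d - k \<le> n + d - P \<and> P - k = s \<and> n + d - P - (d - k) = n - s) \<longleftrightarrow> (k = P - s \<and> s \<le> P)"
      using k assms by auto
    then show "of_nat (d choose k) * (if k \<le> P \<and> d - k \<le> n + d - P then cf (mon s (n - s) :: 'k poly poly) (P - k) (n + d - P - (d - k)) else 0)
        = (if k = P - s \<and> s \<le> P then of_nat (d choose k) else 0)"
      by (auto simp: cf_mon)
  qed
  also have "\<dots> = of_nat (Bn d P s)"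
    by (cases "s \<le> P"; cases "P - s \<le> d") (auto simp: Bn_def sum.delta' binomial_eq_0)
  finally show ?thesis .
qed

lemma homog_cf: "homog n f \<longleftrightarrow> (\<forall>i j. cf f i j \<noteq> 0 \<longrightarrow> i + j = n)"
  by (simp add: homog_def cf_def)

lemma homog_lpow:
  assumes "homog n f"
  shows "homog (n + d) ((var_x + var_y) ^ d * f)"
  unfolding homog_cf
proof (intro allI impI)
  fix P Q assume "cf ((var_x + var_y) ^ d * f) P Q \<noteq> 0"
  then obtain k where "k \<le> d" "k \<le> P" "d - k \<le> Q" "cf f (P - k) (Q - (d - k)) \<noteq> 0"
    unfolding cf_lpow_mult by (smt (verit, ccfv_threshold) atMost_iff mult_zero_right sum.neutral)
  then show "P + Q = n + d" using assms unfolding homog_cf by fastforce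
qed

lemma cf_var_x: "cf (var_x :: 'k::comm_ring_1 poly poly) i j = (if i = 1 \<and> j = 0 then 1 else 0)"
  using cf_xp_mult[of 1 "1 :: 'k poly poly" i j] by (auto simp: cf_1)
lemma cf_var_y: "cf (var_y :: 'k::comm_ring_1 poly poly) i j = (if i = 0 \<and> j = 1 then 1 else 0)"
  using cf_yp_mult[of 1 "1 :: 'k poly poly" i j] by (auto simp: cf_1)

lemma homog_lin: "homog 1 (var_x + var_y :: 'k::comm_ring_1 poly poly)"
  unfolding homog_cf by (auto simp: cf_var_x cf_var_y split: if_splits)

definition build :: "nat \<Rightarrow> nat \<Rightarrow> (nat \<Rightarrow> nat) \<Rightarrow> (nat \<Rightarrow> 'k) \<Rightarrow> 'k::comm_ring_1 poly poly" where
  "build m n s v = (\<Sum>c<m. cst (v c) * mon (s c) (n - s c))"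

lemma cf_build: "cf (build m n s v) i j = (\<Sum>c<m. v c * (if i = s c \<and> j = n - s c then 1 else 0))"
  by (simp add: build_def cf_sum cf_mon)

lemma cf_lpow_build:
  assumes "\<And>c. c < m \<Longrightarrow> s c \<le> n"
  shows "cf ((var_x + var_y) ^ d * build m n s v :: 'k::comm_ring_1 poly poly) P (n + d - P) = (\<Sum>c<m. of_nat (Bn d P (s c)) * v c)"
proof -
  have "(var_x + var_y) ^ d * build m n s v = (\<Sum>c<m. cst (v c) * ((var_x + var_y) ^ d * mon (s c) (n - s c)) :: 'k poly poly)"
    by (simp add: build_def sum_distrib_left mult.left_commute)
  then show ?thesis using assms by (simp add: cf_sum cf_lpow_mon mult.commute)
qed


definition incr :: "nat \<Rightarrow> (nat \<Rightarrow> nat) \<Rightarrow> bool" where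
  "incr m f \<longleftrightarrow> (\<forall>r. Suc r < m \<longrightarrow> f r < f (Suc r))"

lemma incr_mono: "incr m f \<Longrightarrow> i < j \<Longrightarrow> j < m \<Longrightarrow> f i < f j"
proof (induction j)
  case 0 then show ?case by simp
next
  case (Suc j)
  then have "f j < f (Suc j)" unfolding incr_def by auto
  with Suc show ?case by (cases "i = j") auto
qed

lemma incr_inj: "incr m f \<Longrightarrow> i < m \<Longrightarrow> j < m \<Longrightarrow> f i = f j \<Longrightarrow> i = j"
  by (metis incr_mono less_irrefl nat_neq_iff)

lemma det_zero_row_gen:
  assumes "r0 < m" "\<And>c. c < m \<Longrightarrow> g r0 c = 0"
  shows "det (mat m m (\<lambda>(r,c). g r c) :: 'a::comm_ring_1 mat) = 0"
proof -
  have "mat m m (\<lambda>(r,c). g r c) = mat\<^sub>r m m (\<lambda>i. if i = r0 then 0\<^sub>v m else vec m (g i))"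
    by (rule eq_matI) (use assms in auto)
  also have "det \<dots> = 0"
    by (rule det_row_0[OF assms(1)]) auto
  finally show ?thesis .
qed

lemma det_ident_rows_gen:
  assumes "r1 < m" "r2 < m" "r1 \<noteq> r2" "\<And>c. c < m \<Longrightarrow> g r1 c = g r2 c"
  shows "det (mat m m (\<lambda>(r,c). g r c) :: 'a::comm_ring_1 mat) = 0"
  by (rule det_identical_rows[OF _ assms(3) assms(1) assms(2)]) (use assms in \<open>auto intro!: eq_vecI\<close>)

definition BM :: "nat \<Rightarrow> nat \<Rightarrow> (nat \<Rightarrow> nat) \<Rightarrow> (nat \<Rightarrow> nat) \<Rightarrow> int mat" where
  "BM d m p s = mat m m (\<lambda>(r,c). int (Bn d (p r) (s c)))"

lemma incr_perm_id:
  assumes s: "incr m s" and p: "incr m p" and sub: "\<And>r. r < m \<Longrightarrow> \<exists>c<m. s c = p r"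
  shows "r < m \<Longrightarrow> p r = s r"
proof (induction r rule: less_induct)
  case (less r)
  have "p ` {..<m} \<subseteq> s ` {..<m}" using sub by force
  moreover have "card (p ` {..<m}) = m" "card (s ` {..<m}) = m"
    using incr_inj[OF p] incr_inj[OF s] by (auto simp: card_image inj_on_def)
  ultimately have eq: "p ` {..<m} = s ` {..<m}" by (metis card_subset_eq finite_imageI finite_lessThan)
  obtain c where c: "c < m" "s c = p r" using sub less.prems by blast
  have "\<not> c < r"
  proof
    assume "c < r"
    then have "p c = s c" using less.IH less.prems by auto
    then show False using c incr_inj[OF p, of c r] \<open>c < r\<close> less.prems by auto
  qed
  then have 1: "s r \<le> p r" using c incr_mono[OF s, of r c] by (cases "r = c") auto
  obtain c' where c': "c' < m" "p c' = s r" using eq less.prems by (metis image_iff lessThan_iff)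
  have "\<not> c' < r"
  proof
    assume "c' < r"
    then have "p c' = s c'" using less.IH less.prems by auto
    then show False using c' incr_inj[OF s, of c' r] \<open>c' < r\<close> less.prems by auto
  qed
  then have 2: "p r \<le> s r" using c' incr_mono[OF p, of r c'] by (cases "r = c'") auto
  from 1 2 show ?case by simp
qed

lemma det_BM0:
  assumes s: "incr m s" and p: "incr m p"
  shows "det (BM 0 m p s) \<ge> 0 \<and> ((\<forall>c<m. p c = s c) \<longrightarrow> det (BM 0 m p s) > 0)"
proof (cases "\<forall>r<m. \<exists>c<m. s c = p r")
  case True
  then have eq: "\<And>r. r < m \<Longrightarrow> p r = s r" using incr_perm_id[OF s p] by blast
  have "BM 0 m p s = 1\<^sub>m m"
    by (rule eq_matI) (auto simp: BM_def Bn_def eq dest: incr_inj[OF s])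
  then show ?thesis by simp
next
  case False
  then obtain r where r: "r < m" "\<And>c. c < m \<Longrightarrow> s c \<noteq> p r" by blast
  have "det (BM 0 m p s) = 0" unfolding BM_def
    by (rule det_zero_row_gen[OF r(1)]) (use r(2) in \<open>auto simp: Bn_def le_less\<close>)
  moreover have "\<not> (\<forall>c<m. p c = s c)" using r by metis
  ultimately show ?thesis by simp
qed


definition Bn' :: "nat \<Rightarrow> nat \<Rightarrow> nat \<Rightarrow> nat" where
  "Bn' d P S = (if S < P then d choose (P - 1 - S) else 0)"

lemma Bn_Suc: "Bn (Suc d) P S = Bn d P S + Bn' d P S"
proof (cases "S \<le> P")
  case True
  show ?thesis
  proof (cases "S = P")
    case True then show ?thesis by (simp add: Bn_def Bn'_def)
  next
    case False
    then obtain k where k: "P - S = Suc k" "P - 1 - S = k" using \<open>S \<le> P\<close>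
      by (metis Suc_diff_Suc diff_Suc_1 diff_commute le_neq_implies_less)
    then show ?thesis using True False by (simp add: Bn_def Bn'_def)
  qed
next
  case False then show ?thesis by (simp add: Bn_def Bn'_def)
qed

lemma Bn'_0: "Bn' d 0 S = 0" by (simp add: Bn'_def)
lemma Bn'_pos: "0 < P \<Longrightarrow> Bn' d P S = Bn d (P - 1) S"
  by (auto simp: Bn'_def Bn_def)

lemma term_nonneg:
  assumes IH: "\<And>q. incr m q \<Longrightarrow> det (BM d m q s) \<ge> 0"
    and p: "incr m p" and f: "\<And>r. r < m \<Longrightarrow> f r \<in> {0, 1::nat}"
  shows "det (mat m m (\<lambda>(r,c). int (if f r = 0 then Bn d (p r) (s c) else Bn' d (p r) (s c)))) \<ge> 0"
proof (cases "\<exists>r<m. f r = 1 \<and> p r = 0")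
  case True
  then obtain r where "r < m" "f r = 1" "p r = 0" by blast
  then have "det (mat m m (\<lambda>(r,c). int (if f r = 0 then Bn d (p r) (s c) else Bn' d (p r) (s c)))) = 0"
    by (intro det_zero_row_gen[of r]) (auto simp: Bn'_0)
  then show ?thesis by simp
next
  case False
  define q where "q r = (if f r = 0 then p r else p r - 1)" for r
  have fi: "\<And>i. i < m \<Longrightarrow> f i = 0 \<or> (f i = 1 \<and> 0 < p i)" using f False by fastforce
  have eq: "mat m m (\<lambda>(r,c). int (if f r = 0 then Bn d (p r) (s c) else Bn' d (p r) (s c))) = BM d m q s"
    unfolding BM_def by (rule eq_matI) (auto simp: q_def Bn'_pos dest: fi)
  show ?thesis
  proof (cases "incr m q")
    case True then show ?thesis using IH eq by simp
  next
    case False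
    then obtain r where r: "Suc r < m" "\<not> q r < q (Suc r)" unfolding incr_def by blast
    have "p r < p (Suc r)" using p r(1) unfolding incr_def by blast
    moreover have "f r \<in> {0,1}" "f (Suc r) \<in> {0,1}" using f r(1) by auto
    ultimately have "q r = q (Suc r)" using r(2) unfolding q_def by auto
    then have "det (BM d m q s) = 0" unfolding BM_def
      by (intro det_ident_rows_gen[of r m "Suc r"]) (use r in auto)
    then show ?thesis using eq by simp
  qed
qed

lemma det_BM:
  assumes "incr m s" "incr m p"
  shows "det (BM d m p s) \<ge> 0 \<and> ((\<forall>c<m. s c \<le> p c \<and> p c \<le> s c + d) \<longrightarrow> det (BM d m p s) > 0)"
  using assms(2)
proof (induction d arbitrary: p)
  case 0
  then show ?case using det_BM0[OF assms(1) 0] by (metis add_0_right le_antisym)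
next
  case (Suc d p)
  define a where "a r j = vec m (\<lambda>c. int (if j = 0 then Bn d (p r) (s c) else Bn' d (p r) (s c)))" for r j :: nat
  define F where "F = {f. (\<forall>i\<in>{0..<m}. f i \<in> {0, 1::nat}) \<and> (\<forall>i. i \<notin> {0..<m} \<longrightarrow> f i = i)}"
  have carr: "a \<in> {0..<m} \<rightarrow> {0,1} \<rightarrow> carrier_vec m" unfolding a_def by auto
  have "BM (Suc d) m p s = mat\<^sub>r m m (\<lambda>r. finsum_vec TYPE(int) m (a r) {0,1})"
  proof (rule eq_matI)
    fix i j assume ij: "i < dim_row (mat\<^sub>r m m (\<lambda>r. finsum_vec TYPE(int) m (a r) {0,1}))"
      "j < dim_col (mat\<^sub>r m m (\<lambda>r. finsum_vec TYPE(int) m (a r) {0,1}))"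
    then have ij': "i < m" "j < m" by auto
    have "finsum_vec TYPE(int) m (a i) {0,1} $ j = (\<Sum>k\<in>{0,1::nat}. a i k $ j)"
      by (rule index_finsum_vec) (use ij' in \<open>auto simp: a_def\<close>)
    then show "BM (Suc d) m p s $$ (i, j) = mat\<^sub>r m m (\<lambda>r. finsum_vec TYPE(int) m (a r) {0,1}) $$ (i, j)"
      using ij' by (simp add: BM_def a_def Bn_Suc)
  qed (auto simp: BM_def)
  then have detS: "det (BM (Suc d) m p s) = (\<Sum>f\<in>F. det (mat\<^sub>r m m (\<lambda>r. a r (f r))))"
    unfolding F_def using det_linear_rows_sum[OF _ carr] by simp
  have termeq: "mat\<^sub>r m m (\<lambda>r. a r (f r)) = mat m m (\<lambda>(r,c). int (if f r = 0 then Bn d (p r) (s c) else Bn' d (p r) (s c)))" for f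
    by (rule eq_matI) (auto simp: a_def)
  have IH0: "\<And>q. incr m q \<Longrightarrow> det (BM d m q s) \<ge> 0" using Suc.IH by blast
  have nonneg: "det (mat\<^sub>r m m (\<lambda>r. a r (f r))) \<ge> 0" if "f \<in> F" for f
    unfolding termeq by (rule term_nonneg[OF IH0 Suc.prems]) (use that in \<open>auto simp: F_def\<close>)
  have finF: "finite F" unfolding F_def
    by (rule finite_subset[OF _ finite_bounded_functions[of "{0,1::nat}" "{0..<m}"]]) auto
  have part1: "det (BM (Suc d) m p s) \<ge> 0" unfolding detS using nonneg by (simp add: sum_nonneg)
  have part2: "det (BM (Suc d) m p s) > 0" if inter: "\<forall>c<m. s c \<le> p c \<and> p c \<le> s c + Suc d"
  proof -
    define f0 where "f0 r = (if r < m then (if s r < p r then 1 else 0) else r)" for r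
    define q where "q r = (if s r < p r then p r - 1 else p r)" for r
    have f0F: "f0 \<in> F" unfolding F_def f0_def by auto
    have qi: "incr m q" unfolding incr_def
    proof (intro allI impI)
      fix r assume r: "Suc r < m"
      then have "s r < s (Suc r)" "p r < p (Suc r)" using assms(1) Suc.prems unfolding incr_def by auto
      then show "q r < q (Suc r)" using inter r unfolding q_def by (auto split: if_splits)
    qed
    have qint: "\<forall>c<m. s c \<le> q c \<and> q c \<le> s c + d" using inter unfolding q_def by auto
    have "mat\<^sub>r m m (\<lambda>r. a r (f0 r)) = BM d m q s"
      unfolding termeq BM_def by (rule eq_matI) (auto simp: f0_def q_def Bn'_pos)
    then have pos: "det (mat\<^sub>r m m (\<lambda>r. a r (f0 r))) > 0" using Suc.IH[OF qi] qint by simp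
    have "det (mat\<^sub>r m m (\<lambda>r. a r (f0 r))) \<le> (\<Sum>f\<in>F. det (mat\<^sub>r m m (\<lambda>r. a r (f r))))"
      by (rule member_le_sum[OF f0F]) (use nonneg finF in auto)
    then show ?thesis unfolding detS using pos by simp
  qed
  show ?case using part1 part2 by blast
qed


definition KM :: "nat \<Rightarrow> nat \<Rightarrow> (nat \<Rightarrow> nat) \<Rightarrow> (nat \<Rightarrow> nat) \<Rightarrow> 'k::field_char_0 mat" where
  "KM d m p s = mat m m (\<lambda>(r,c). of_nat (Bn d (p r) (s c)))"

lemma det_KM:
  assumes "incr m s" "incr m p" "\<forall>c<m. s c \<le> p c \<and> p c \<le> s c + d"
  shows "det (KM d m p s :: 'k::field_char_0 mat) \<noteq> 0"
proof -
  have "KM d m p s = map_mat (of_int :: int \<Rightarrow> 'k) (BM d m p s)"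
    by (rule eq_matI) (auto simp: KM_def BM_def)
  then have "det (KM d m p s :: 'k mat) = of_int (det (BM d m p s))"
    by (simp add: of_int_hom.hom_det)
  moreover have "det (BM d m p s) > 0" using det_BM[OF assms(1,2)] assms(3) by blast
  ultimately show ?thesis by simp
qed

lemma KM_mult: "r < m \<Longrightarrow> (KM d m p s *\<^sub>v vec m v) $ r = (\<Sum>c<m. of_nat (Bn d (p r) (s c)) * v c)"
  by (simp add: KM_def mult_mat_vec_def scalar_prod_def lessThan_atLeast0)

lemma sys_inj:
  assumes "incr m s" "incr m p" "\<forall>c<m. s c \<le> p c \<and> p c \<le> s c + d"
    and "\<And>r. r < m \<Longrightarrow> (\<Sum>c<m. of_nat (Bn d (p r) (s c)) * v c) = (0 :: 'k::field_char_0)"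
  shows "\<And>c. c < m \<Longrightarrow> v c = 0"
proof -
  have A: "(KM d m p s :: 'k mat) \<in> carrier_mat m m" by (simp add: KM_def)
  have "KM d m p s *\<^sub>v vec m v = 0\<^sub>v m"
  proof (rule eq_vecI)
    fix i assume "i < dim_vec (0\<^sub>v m :: 'k vec)"
    then have "i < m" by simp
    then show "(KM d m p s *\<^sub>v vec m v) $ i = 0\<^sub>v m $ i"
      using KM_mult[of i m d p s v] assms(4)[of i] by simp
  qed (simp add: KM_def)
  moreover have "vec m v \<in> carrier_vec m" by simp
  ultimately have "vec m v = 0\<^sub>v m"
    using det_KM[OF assms(1-3)] det_0_iff_vec_prod_zero_field[OF A] by blast
  then show "\<And>c. c < m \<Longrightarrow> v c = 0" by (metis index_vec index_zero_vec(1))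
qed

lemma sys_surj:
  assumes "incr m s" "incr m p" "\<forall>c<m. s c \<le> p c \<and> p c \<le> s c + d"
  shows "\<exists>v. \<forall>r<m. (\<Sum>c<m. of_nat (Bn d (p r) (s c)) * v c) = (w r :: 'k::field_char_0)"
proof -
  have A: "(KM d m p s :: 'k mat) \<in> carrier_mat m m" by (simp add: KM_def)
  from det_non_zero_imp_unit[OF A det_KM[OF assms], of "()"]
  obtain B :: "'k mat" where B: "B \<in> carrier_mat m m" "KM d m p s * B = 1\<^sub>m m"
    unfolding Units_def ring_mat_def by auto
  define u where "u = B *\<^sub>v vec m w"
  have u: "u \<in> carrier_vec m" using B unfolding u_def by auto
  have "KM d m p s *\<^sub>v u = vec m w"
    unfolding u_def using B A by (simp add: assoc_mult_mat_vec[symmetric, of _ m m _ m])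
  then have "\<forall>r<m. (\<Sum>c<m. of_nat (Bn d (p r) (s c)) * (u $ c)) = w r"
  proof -
    assume H: "KM d m p s *\<^sub>v u = vec m w"
    have "vec m (\<lambda>c. u $ c) = u" using u by auto
    then show ?thesis using H KM_mult[of _ m d p s "\<lambda>c. u $ c"] by (metis index_vec)
  qed
  then show ?thesis by blast
qed


definition "inXi a b al be n x \<longleftrightarrow> max 0 (n+1-b) \<le> x \<and> x < min a (n+1) \<and> (al \<le> x \<or> x < n+1-be)"
  for a b al be n x :: int
definition "c1i b n d = max 0 (n+d+1-b) - max 0 (n+1-b)" for b n d :: int
definition "c2i a n d = min a (n+d+1) - min a (n+1)" for a n d :: int
definition "phii a b al n d x = (if x < al then x + c1i b n d else x + c2i a n d)" for a b al n d x :: int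
definition "psii a b al n d y = (if al + c2i a n d \<le> y then y - c2i a n d else y - c1i b n d)" for a b al n d y :: int

lemmas defsi = inXi_def c1i_def c2i_def phii_def psii_def

context
  fixes a b al be n d :: int
  assumes prm: "0 < a" "0 < b" "0 \<le> al" "al \<le> a" "0 \<le> be" "be \<le> b" "0 \<le> n" "0 \<le> d"
begin

lemma W1:
  assumes "inXi a b al be n x" "\<not> inXi a b al be (n+d) (phii a b al n d x)"
  and "inXi a b al be (n+d) y"
  shows "inXi a b al be n (psii a b al n d y) \<and> psii a b al n d y \<le> y \<and> y \<le> psii a b al n d y + d"
  using assms prm unfolding defsi by smt
lemma W2:
  assumes "inXi a b al be n x" "\<not> inXi a b al be (n+d) (phii a b al n d x)"
  and "inXi a b al be (n+d) y" "inXi a b al be (n+d) y'" "y < y'"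
  shows "psii a b al n d y < psii a b al n d y'"
  using assms prm unfolding defsi by smt
lemma W3:
  assumes "inXi a b al be n x" "inXi a b al be n x'" "x < x'" "\<not> phii a b al n d x < phii a b al n d x'"
  and "inXi a b al be (n+d) y"
  shows "inXi a b al be n (psii a b al n d y) \<and> psii a b al n d y \<le> y \<and> y \<le> psii a b al n d y + d"
  using assms prm unfolding defsi by smt
lemma W4:
  assumes "inXi a b al be n x" "inXi a b al be n x'" "x < x'" "\<not> phii a b al n d x < phii a b al n d x'"
  and "inXi a b al be (n+d) y" "inXi a b al be (n+d) y'" "y < y'"
  shows "psii a b al n d y < psii a b al n d y'"
  using assms prm unfolding defsi by smt

lemma phii_bounds: "x \<le> phii a b al n d x \<and> phii a b al n d x \<le> x + d"
  using prm unfolding defsi by smt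

lemma inXi_nonneg: "inXi a b al be m x \<Longrightarrow> 0 \<le> x"
  unfolding inXi_def by simp

lemma comb_disj:
  "((\<forall>x. inXi a b al be n x \<longrightarrow> inXi a b al be (n+d) (phii a b al n d x)) \<and>
    (\<forall>x x'. inXi a b al be n x \<longrightarrow> inXi a b al be n x' \<longrightarrow> x < x' \<longrightarrow> phii a b al n d x < phii a b al n d x'))
 \<or> ((\<forall>y. inXi a b al be (n+d) y \<longrightarrow> inXi a b al be n (psii a b al n d y) \<and> psii a b al n d y \<le> y \<and> y \<le> psii a b al n d y + d) \<and>
    (\<forall>y y'. inXi a b al be (n+d) y \<longrightarrow> inXi a b al be (n+d) y' \<longrightarrow> y < y' \<longrightarrow> psii a b al n d y < psii a b al n d y'))"
proof (cases "\<forall>x. inXi a b al be n x \<longrightarrow> inXi a b al be (n+d) (phii a b al n d x)")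
  case False
  then obtain x where "inXi a b al be n x" "\<not> inXi a b al be (n+d) (phii a b al n d x)" by blast
  then show ?thesis using W1 W2 by blast
next
  case T: True
  show ?thesis
  proof (cases "\<forall>x x'. inXi a b al be n x \<longrightarrow> inXi a b al be n x' \<longrightarrow> x < x' \<longrightarrow> phii a b al n d x < phii a b al n d x'")
    case True then show ?thesis using T by blast
  next
    case False
    then obtain x x' where "inXi a b al be n x" "inXi a b al be n x'" "x < x'" "\<not> phii a b al n d x < phii a b al n d x'"
      by blast
    then show ?thesis using W3 W4 by blast
  qed
qed

end

lemma region_iff:
  fixes a b al be i j :: nat
  shows "((al \<le> i \<or> be \<le> j) \<and> i < a \<and> j < b) \<longleftrightarrow> inXi (int a) (int b) (int al) (int be) (int (i + j)) (int i)"
  unfolding inXi_def by auto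

lemma inXi_bounds:
  fixes a b al be m x :: nat
  assumes "inXi (int a) (int b) (int al) (int be) (int m) (int x)"
  shows "x \<le> m" "x < a" "m - x < b" "al \<le> x \<or> be \<le> m - x"
  using assms unfolding inXi_def by auto

lemma enum_set:
  assumes "finite A"
  shows "\<exists>s. incr (card A) s \<and> (\<forall>c<card A. s c \<in> A) \<and> (\<forall>x\<in>A. \<exists>c<card A. s c = x)"
proof -
  define xs where "xs = sorted_list_of_set A"
  have len: "length xs = card A" and st: "set xs = A" and so: "sorted_wrt (<) xs"
    using assms unfolding xs_def by auto
  have "incr (card A) (\<lambda>c. xs ! c)"
    unfolding incr_def using so len by (auto simp: sorted_wrt_iff_nth_less)
  moreover have "\<forall>c<card A. xs ! c \<in> A" using st len by auto
  moreover have "\<forall>x\<in>A. \<exists>c<card A. xs ! c = x" using st len by (metis in_set_conv_nth)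
  ultimately show ?thesis by blast
qed


lemma cf_build_at:
  assumes "incr m s" "c0 < m"
  shows "cf (build m n s v) (s c0) (n - s c0) = v c0"
proof -
  have "cf (build m n s v) (s c0) (n - s c0) = (\<Sum>c<m. if c = c0 then v c else 0)"
    unfolding cf_build by (rule sum.cong[OF refl]) (use incr_inj[OF assms(1)] assms(2) in auto)
  then show ?thesis using assms(2) by simp
qed

lemma cf_build_nz:
  assumes "cf (build m n s v) i j \<noteq> 0"
  shows "\<exists>c<m. i = s c \<and> j = n - s c"
proof (rule ccontr)
  assume "\<not> ?thesis"
  then have "cf (build m n s v) i j = 0" unfolding cf_build by (intro sum.neutral) auto
  with assms show False by simp
qed

lemma build_zero: "(\<And>c. c < m \<Longrightarrow> v c = 0) \<Longrightarrow> build m n s v = 0"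
  unfolding build_def by (simp add: cst_def)

context
  fixes a b al be :: nat
  assumes prm: "0 < a" "0 < b" "al \<le> a" "be \<le> b"
begin

abbreviation "R n x \<equiv> inXi (int a) (int b) (int al) (int be) (int n) (int x)"

lemma inj_case:
  assumes s: "incr m s" and p: "incr m p" and il: "\<forall>c<m. s c \<le> p c \<and> p c \<le> s c + d"
    and sX: "\<forall>c<m. R n (s c)" and sAll: "\<forall>x. R n x \<longrightarrow> (\<exists>c<m. s c = x)"
    and pY: "\<forall>c<m. R (n+d) (p c)"
  shows "lef_inj (ideal2 ((var_x :: 'k::field_char_0 poly poly) ^ al) (var_y ^ be)) (ideal2 (var_x ^ a) (var_y ^ b)) (var_x + var_y) d n"
  unfolding lef_inj_def
proof (intro ballI impI)
  fix f :: "'k poly poly"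
  assume fI: "f \<in> ideal2 (var_x ^ al) (var_y ^ be)" and hf: "homog n f"
    and lJ: "(var_x + var_y) ^ d * f \<in> ideal2 (var_x ^ a) (var_y ^ b)"
  define v where "v c = cf f (s c) (n - s c)" for c
  define f' where "f' = build m n s v"
  have sn: "\<And>c. c < m \<Longrightarrow> s c \<le> n" using sX inXi_bounds by blast
  have diffJ: "f - f' \<in> ideal2 (var_x ^ a) (var_y ^ b)"
    unfolding mem_ideal_iff
  proof (intro allI impI)
    fix i j assume nz: "cf (f - f') i j \<noteq> 0"
    show "a \<le> i \<or> b \<le> j"
    proof (cases "\<exists>c<m. i = s c \<and> j = n - s c")
      case True
      then obtain c where c: "c < m" "i = s c" "j = n - s c" by blast
      have "cf f' i j = v c" unfolding f'_def using cf_build_at[OF s c(1)] c by simp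
      also have "\<dots> = cf f i j" using c by (simp add: v_def)
      finally have "cf f' i j = cf f i j" .
      then show ?thesis using nz by simp
    next
      case False
      then have "cf f' i j = 0" unfolding f'_def using cf_build_nz by blast
      then have "cf f i j \<noteq> 0" using nz by simp
      then have ij: "i + j = n" "al \<le> i \<or> be \<le> j" using hf fI unfolding homog_cf mem_ideal_iff by auto
      show ?thesis
      proof (rule ccontr)
        assume "\<not> ?thesis"
        then have "R n i" using region_iff[of al i be j a b] ij by auto
        then obtain c where "c < m" "s c = i" using sAll by blast
        then show False using False ij by auto
      qed
    qed
  qed
  have "(var_x + var_y) ^ d * f' = (var_x + var_y) ^ d * f - (var_x + var_y) ^ d * (f - f')"
    by (simp add: algebra_simps)
  then have lJ': "(var_x + var_y) ^ d * f' \<in> ideal2 (var_x ^ a) (var_y ^ b)"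
    using lJ diffJ by (simp add: ideal2_diff ideal2_mult)
  have eqs: "(\<Sum>c<m. of_nat (Bn d (p r) (s c)) * v c) = (0 :: 'k)" if r: "r < m" for r
  proof -
    have b: "p r \<le> n + d" "p r < a" "n + d - p r < b" using pY r inXi_bounds by blast+
    have "cf ((var_x + var_y) ^ d * f') (p r) (n + d - p r) = 0"
      using lJ' b(2,3) unfolding mem_ideal_iff by (meson not_le)
    then show ?thesis unfolding f'_def using cf_lpow_build[of m s n d v "p r"] sn by simp
  qed
  have "\<And>c. c < m \<Longrightarrow> v c = 0" by (rule sys_inj[OF s p il eqs])
  then have "f' = 0" unfolding f'_def by (rule build_zero)
  then show "f \<in> ideal2 (var_x ^ a) (var_y ^ b)" using diffJ by simp
qed

lemma surj_case:
  assumes s: "incr m s" and p: "incr m p" and il: "\<forall>c<m. s c \<le> p c \<and> p c \<le> s c + d"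
    and sX: "\<forall>c<m. R n (s c)"
    and pY: "\<forall>c<m. R (n+d) (p c)" and pAll: "\<forall>y. R (n+d) y \<longrightarrow> (\<exists>c<m. p c = y)"
  shows "lef_surj (ideal2 ((var_x :: 'k::field_char_0 poly poly) ^ al) (var_y ^ be)) (ideal2 (var_x ^ a) (var_y ^ b)) (var_x + var_y) d n"
  unfolding lef_surj_def
proof (intro ballI impI)
  fix g :: "'k poly poly"
  assume gI: "g \<in> ideal2 (var_x ^ al) (var_y ^ be)" and hg: "homog (n + d) g"
  define w where "w r = cf g (p r) (n + d - p r)" for r
  obtain v where v: "\<forall>r<m. (\<Sum>c<m. of_nat (Bn d (p r) (s c)) * v c) = w r"
    using sys_surj[OF s p il] by blast
  define f where "f = build m n s v"
  have sn: "\<And>c. c < m \<Longrightarrow> s c \<le> n" using sX inXi_bounds by blast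
  have fI: "f \<in> ideal2 (var_x ^ al) (var_y ^ be)"
    unfolding mem_ideal_iff
  proof (intro allI impI)
    fix i j assume "cf f i j \<noteq> 0"
    then obtain c where c: "c < m" "i = s c" "j = n - s c" unfolding f_def using cf_build_nz by blast
    then show "al \<le> i \<or> be \<le> j" using inXi_bounds(4)[OF sX[rule_format, OF c(1)]] by simp
  qed
  have hf: "homog n f" unfolding homog_cf
  proof (intro allI impI)
    fix i j assume "cf f i j \<noteq> 0"
    then obtain c where "c < m" "i = s c" "j = n - s c" unfolding f_def using cf_build_nz by blast
    then show "i + j = n" using sn by auto
  qed
  have hl: "homog (n + d) ((var_x + var_y) ^ d * f)" by (rule homog_lpow[OF hf])
  have dI: "g - (var_x + var_y) ^ d * f \<in> ideal2 (var_x ^ al) (var_y ^ be)"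
    using gI fI by (simp add: ideal2_diff ideal2_mult)
  have "g - (var_x + var_y) ^ d * f \<in> ideal2 (var_x ^ a) (var_y ^ b)"
    unfolding mem_ideal_iff
  proof (intro allI impI)
    fix i j assume nz: "cf (g - (var_x + var_y) ^ d * f) i j \<noteq> 0"
    have ij: "i + j = n + d"
    proof (cases "cf g i j = 0")
      case True
      then have "cf ((var_x + var_y) ^ d * f) i j \<noteq> 0" using nz by simp
      then show ?thesis using hl unfolding homog_cf by blast
    next
      case False then show ?thesis using hg unfolding homog_cf by blast
    qed
    have ij2: "al \<le> i \<or> be \<le> j" using dI nz unfolding mem_ideal_iff by blast
    show "a \<le> i \<or> b \<le> j"
    proof (rule ccontr)
      assume "\<not> ?thesis"
      then have "R (n + d) i" using region_iff[of al i be j a b] ij ij2 by auto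
      then obtain r where r: "r < m" "p r = i" using pAll by blast
      have jj: "j = n + d - p r" using ij r by simp
      have "cf ((var_x + var_y) ^ d * f) (p r) (n + d - p r) = w r"
        unfolding f_def using cf_lpow_build[of m s n d v "p r"] sn v r(1) by simp
      then have "cf (g - (var_x + var_y) ^ d * f) i j = 0" using r jj w_def by simp
      then show False using nz by simp
    qed
  qed
  then show "\<exists>f\<in>ideal2 (var_x ^ al) (var_y ^ be). homog n f \<and> g - (var_x + var_y) ^ d * f \<in> ideal2 (var_x ^ a) (var_y ^ b)"
    using fI hf by blast
qed

end


lemma finite_R: "finite {x::nat. inXi (int a) (int b) (int al) (int be) (int n) (int x)}"
  by (rule finite_subset[of _ "{..n}"]) (auto simp: inXi_def)

lemma slp_step:
  fixes a b al be n d :: nat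
  assumes prm: "0 < a" "0 < b" "al \<le> a" "be \<le> b"
  shows "lef_inj (ideal2 ((var_x :: 'k::field_char_0 poly poly) ^ al) (var_y ^ be)) (ideal2 (var_x ^ a) (var_y ^ b)) (var_x + var_y) d n
       \<or> lef_surj (ideal2 ((var_x :: 'k::field_char_0 poly poly) ^ al) (var_y ^ be)) (ideal2 (var_x ^ a) (var_y ^ b)) (var_x + var_y) d n"
proof -
  let ?A = "int a" and ?B = "int b" and ?AL = "int al" and ?BE = "int be" and ?N = "int n" and ?D = "int d"
  have prmi: "0 < ?A" "0 < ?B" "0 \<le> ?AL" "?AL \<le> ?A" "0 \<le> ?BE" "?BE \<le> ?B" "0 \<le> ?N" "0 \<le> ?D"
    using prm by auto
  have nd: "int (n + d) = ?N + ?D" by simp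
  note disj = comb_disj[OF prmi]
  show ?thesis
  proof (cases "(\<forall>x. inXi ?A ?B ?AL ?BE ?N x \<longrightarrow> inXi ?A ?B ?AL ?BE (?N + ?D) (phii ?A ?B ?AL ?N ?D x)) \<and>
    (\<forall>x x'. inXi ?A ?B ?AL ?BE ?N x \<longrightarrow> inXi ?A ?B ?AL ?BE ?N x' \<longrightarrow> x < x' \<longrightarrow> phii ?A ?B ?AL ?N ?D x < phii ?A ?B ?AL ?N ?D x')")
    case True
    then have V1: "\<And>x. inXi ?A ?B ?AL ?BE ?N x \<Longrightarrow> inXi ?A ?B ?AL ?BE (?N + ?D) (phii ?A ?B ?AL ?N ?D x)"
      and V2: "\<And>x x'. inXi ?A ?B ?AL ?BE ?N x \<Longrightarrow> inXi ?A ?B ?AL ?BE ?N x' \<Longrightarrow> x < x' \<Longrightarrow> phii ?A ?B ?AL ?N ?D x < phii ?A ?B ?AL ?N ?D x'"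
      by blast+
    define X where "X = {x::nat. inXi ?A ?B ?AL ?BE ?N (int x)}"
    obtain s where s: "incr (card X) s" "\<forall>c<card X. s c \<in> X" "\<forall>x\<in>X. \<exists>c<card X. s c = x"
      using enum_set[OF finite_R[of a b al be n, folded X_def]] by blast
    define p where "p c = nat (phii ?A ?B ?AL ?N ?D (int (s c)))" for c
    have pint: "int (p c) = phii ?A ?B ?AL ?N ?D (int (s c))" for c
      unfolding p_def using phii_bounds[OF prmi, of "int (s c)"] by simp
    have sX: "\<forall>c<card X. inXi ?A ?B ?AL ?BE ?N (int (s c))" using s(2) unfolding X_def by blast
    have pi: "incr (card X) p" unfolding incr_def
    proof (intro allI impI)
      fix r assume r: "Suc r < card X"
      have "int (p r) < int (p (Suc r))" unfolding pint
        by (rule V2) (use sX r s(1) in \<open>auto simp: incr_def\<close>)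
      then show "p r < p (Suc r)" by simp
    qed
    have il: "\<forall>c<card X. s c \<le> p c \<and> p c \<le> s c + d"
    proof (intro allI impI)
      fix c
      have "int (s c) \<le> int (p c) \<and> int (p c) \<le> int (s c) + int d" unfolding pint
        using phii_bounds[OF prmi, of "int (s c)"] by simp
      then show "s c \<le> p c \<and> p c \<le> s c + d" by linarith
    qed
    have sAll: "\<forall>x. inXi ?A ?B ?AL ?BE (int n) (int x) \<longrightarrow> (\<exists>c<card X. s c = x)"
      using s(3) unfolding X_def by blast
    have pY: "\<forall>c<card X. inXi ?A ?B ?AL ?BE (int (n + d)) (int (p c))"
      unfolding nd pint using sX V1 by blast
    have "lef_inj (ideal2 ((var_x :: 'k::field_char_0 poly poly) ^ al) (var_y ^ be)) (ideal2 (var_x ^ a) (var_y ^ b)) (var_x + var_y) d n"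
      by (rule inj_case[OF prm s(1) pi il sX sAll pY])
    then show ?thesis by blast
  next
    case False
    then have V: "(\<forall>y. inXi ?A ?B ?AL ?BE (?N+?D) y \<longrightarrow> inXi ?A ?B ?AL ?BE ?N (psii ?A ?B ?AL ?N ?D y) \<and> psii ?A ?B ?AL ?N ?D y \<le> y \<and> y \<le> psii ?A ?B ?AL ?N ?D y + ?D) \<and>
    (\<forall>y y'. inXi ?A ?B ?AL ?BE (?N+?D) y \<longrightarrow> inXi ?A ?B ?AL ?BE (?N+?D) y' \<longrightarrow> y < y' \<longrightarrow> psii ?A ?B ?AL ?N ?D y < psii ?A ?B ?AL ?N ?D y')"
      using disj by blast
    then have V1: "\<And>y. inXi ?A ?B ?AL ?BE (?N+?D) y \<Longrightarrow> inXi ?A ?B ?AL ?BE ?N (psii ?A ?B ?AL ?N ?D y) \<and> psii ?A ?B ?AL ?N ?D y \<le> y \<and> y \<le> psii ?A ?B ?AL ?N ?D y + ?D"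
      and V2: "\<And>y y'. inXi ?A ?B ?AL ?BE (?N+?D) y \<Longrightarrow> inXi ?A ?B ?AL ?BE (?N+?D) y' \<Longrightarrow> y < y' \<Longrightarrow> psii ?A ?B ?AL ?N ?D y < psii ?A ?B ?AL ?N ?D y'"
      by blast+
    define Y where "Y = {y::nat. inXi ?A ?B ?AL ?BE (int (n + d)) (int y)}"
    obtain p where p: "incr (card Y) p" "\<forall>c<card Y. p c \<in> Y" "\<forall>y\<in>Y. \<exists>c<card Y. p c = y"
      using enum_set[OF finite_R[of a b al be "n + d", folded Y_def]] by blast
    have pY: "\<forall>c<card Y. inXi ?A ?B ?AL ?BE (int (n + d)) (int (p c))" using p(2) unfolding Y_def by blast
    define s where "s c = nat (psii ?A ?B ?AL ?N ?D (int (p c)))" for c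
    have V1p: "inXi ?A ?B ?AL ?BE ?N (psii ?A ?B ?AL ?N ?D (int (p c))) \<and> psii ?A ?B ?AL ?N ?D (int (p c)) \<le> int (p c) \<and> int (p c) \<le> psii ?A ?B ?AL ?N ?D (int (p c)) + ?D"
      if "c < card Y" for c
      using V1 pY that nd by auto
    have sint: "int (s c) = psii ?A ?B ?AL ?N ?D (int (p c))" if "c < card Y" for c
      unfolding s_def using V1p[OF that] inXi_nonneg[OF prmi] by auto
    have si: "incr (card Y) s" unfolding incr_def
    proof (intro allI impI)
      fix r assume r: "Suc r < card Y"
      have "int (s r) < int (s (Suc r))" unfolding sint[of r] sint[of "Suc r"] sint[OF r] sint[of r] using r
        by (simp add: sint) (rule V2, use pY r p(1) nd in \<open>auto simp: incr_def\<close>)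
      then show "s r < s (Suc r)" by simp
    qed
    have il: "\<forall>c<card Y. s c \<le> p c \<and> p c \<le> s c + d"
    proof (intro allI impI)
      fix c assume c: "c < card Y"
      have "int (s c) \<le> int (p c) \<and> int (p c) \<le> int (s c) + int d" unfolding sint[OF c]
        using V1p[OF c] by simp
      then show "s c \<le> p c \<and> p c \<le> s c + d" by linarith
    qed
    have sX: "\<forall>c<card Y. inXi ?A ?B ?AL ?BE ?N (int (s c))" using V1p sint by auto
    have pAll: "\<forall>y. inXi ?A ?B ?AL ?BE (int (n + d)) (int y) \<longrightarrow> (\<exists>c<card Y. p c = y)"
      using p(3) unfolding Y_def by blast
    have "lef_surj (ideal2 ((var_x :: 'k::field_char_0 poly poly) ^ al) (var_y ^ be)) (ideal2 (var_x ^ a) (var_y ^ b)) (var_x + var_y) d n"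
      by (rule surj_case[OF prm si p(1) il sX pY pAll])
    then show ?thesis by blast
  qed
qed

theorem corollary3p2:
  fixes a b \<alpha> \<beta> :: nat
  assumes "0 < a" and "0 < b" and "\<alpha> \<le> a" and "\<beta> \<le> b"
  shows "quot_has_SLP
           (ideal2 ((var_x :: 'k::field_char_0 poly poly) ^ \<alpha>) (var_y ^ \<beta>))
           (ideal2 ((var_x :: 'k poly poly) ^ a) (var_y ^ b))"
  unfolding quot_has_SLP_def
  using homog_lin slp_step[OF assms] by blast

end
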